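(* Let $|\Omega\rangle=d^{-1/2}\sum_{j=1}^d|j,j\rangle$ and $\mathcal{U}=\mathrm{conv}\{(\mathbb{1}\otimes U)|\Omega\rangle\langle\Omega|(\mathbb{1}\otimes U^\dagger): U\in\mathcal{M}_d\text{ unitary}\}$. For a unital quantum channel $T:\mathcal{M}_d\to\mathcal{M}_d$ (completely positive, trace-preserving, $T(\mathbb{1})=\mathbb{1}$) with Jamiolkowski state $\rho_T=(\mathrm{id}\otimes T)(|\Omega\rangle\langle\Omega|)$, define $$\|T\|_{\mathcal{U}}:=\inf\{\alpha_p+\alpha_n:\ \rho_T=\alpha_p\sigma_p-\alpha_n\sigma_n,\ \alpha_p,\alpha_n\ge0,\ \sigma_p,\sigma_n\in\mathcal{U}\}.$$ Let $T_1,\dots,T_k$ be unital quantum channels on $\mathcal{M}_d$ and $p_1,\dots,p_k\ge0$ with $\sum_ip_i=1$. Then $\|T_1\circ T_2\circ\cdots\circ T_k\|_{\mathcal{U}}\le\prod_i\|T_i\|_{\mathcal{U}}$ and $\|\sum_ip_iT_i\|_{\mathcal{U}}\le\sum_ip_i\|T_i\|_{\mathcal{U}}$. *)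

theory Defs
  imports "HOL-Analysis.Analysis"
begin

text \<open>Matrices in M_d are represented as complex^'n^'n with d = CARD('n);
  operators on C^d \<otimes> C^d are indexed by the product type 'n \<times> 'n.\<close>

type_synonym 'n cmat = "complex^'n^'n"

definition adjointm :: "complex^'m^'n \<Rightarrow> complex^'n^'m" where
  "adjointm U = (\<chi> i j. cnj (U $ j $ i))"

definition unitary :: "'n::finite cmat \<Rightarrow> bool" where
  "unitary U \<longleftrightarrow> U ** adjointm U = mat 1 \<and> adjointm U ** U = mat 1"

definition trace_m :: "complex^'n^'n \<Rightarrow> complex" where
  "trace_m A = (\<Sum>i\<in>UNIV. A $ i $ i)"

definition ketbra :: "complex^'m \<Rightarrow> complex^'m^'m" where
  "ketbra \<psi> = (\<chi> a b. \<psi> $ a * cnj (\<psi> $ b))"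

definition Omega :: "complex^('n::finite \<times> 'n)" where
  "Omega = (\<chi> ij. if fst ij = snd ij then complex_of_real (1 / sqrt (real CARD('n))) else 0)"

text \<open>(1 \<otimes> U) applied to a vector of C^d \<otimes> C^d.\<close>
definition id_tensor_vec :: "'n::finite cmat \<Rightarrow> complex^('n \<times> 'n) \<Rightarrow> complex^('n \<times> 'n)" where
  "id_tensor_vec U v = (\<chi> ab. \<Sum>c\<in>UNIV. U $ snd ab $ c * v $ (fst ab, c))"

definition Ucal :: "(complex^('n::finite \<times> 'n)^('n \<times> 'n)) set" where
  "Ucal = convex hull {ketbra (id_tensor_vec U Omega) | U. unitary U}"

text \<open>(id \<otimes> T) applied to an operator on C^d \<otimes> C^d (block-wise application of T).\<close>
definition id_tensor_map :: "('n::finite cmat \<Rightarrow> 'n cmat) \<Rightarrow>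
    complex^('m::finite \<times> 'n)^('m \<times> 'n) \<Rightarrow> complex^('m \<times> 'n)^('m \<times> 'n)" where
  "id_tensor_map T X = (\<chi> ab ce. T (\<chi> b' e'. X $ (fst ab, b') $ (fst ce, e')) $ snd ab $ snd ce)"

definition choi :: "('n::finite cmat \<Rightarrow> 'n cmat) \<Rightarrow> complex^('n \<times> 'n)^('n \<times> 'n)" where
  "choi T = id_tensor_map T (ketbra Omega)"

definition cscale :: "complex \<Rightarrow> complex^'n^'m \<Rightarrow> complex^'n^'m" where
  "cscale c A = (\<chi> i j. c * A $ i $ j)"

definition clinear_map :: "('n::finite cmat \<Rightarrow> 'n cmat) \<Rightarrow> bool" where
  "clinear_map T \<longleftrightarrow> (\<forall>A B. T (A + B) = T A + T B) \<and> (\<forall>c A. T (cscale c A) = cscale c (T A))"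

text \<open>Positive semidefiniteness of a k\<times>k block matrix with d\<times>d blocks
  (given as a function of the block indices i, j < k).\<close>
definition psd_block :: "nat \<Rightarrow> (nat \<Rightarrow> nat \<Rightarrow> 'n::finite cmat) \<Rightarrow> bool" where
  "psd_block k X \<longleftrightarrow> (\<forall>v :: nat \<Rightarrow> complex^'n.
     (let q = (\<Sum>i<k. \<Sum>j<k. (\<Sum>a\<in>UNIV. cnj (v i $ a) * ((X i j) *v (v j)) $ a))
      in Im q = 0 \<and> Re q \<ge> 0))"

definition completely_positive :: "('n::finite cmat \<Rightarrow> 'n cmat) \<Rightarrow> bool" where
  "completely_positive T \<longleftrightarrow>
     (\<forall>k X. psd_block k X \<longrightarrow> psd_block k (\<lambda>i j. T (X i j)))"

definition unital_channel :: "('n::finite cmat \<Rightarrow> 'n cmat) \<Rightarrow> bool" where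
  "unital_channel T \<longleftrightarrow> clinear_map T \<and> completely_positive T \<and>
     (\<forall>A. trace_m (T A) = trace_m A) \<and> T (mat 1) = mat 1"

definition normU :: "('n::finite cmat \<Rightarrow> 'n cmat) \<Rightarrow> real" where
  "normU T = Inf {ap + an | ap an sp sn. ap \<ge> 0 \<and> an \<ge> 0 \<and> sp \<in> Ucal \<and> sn \<in> Ucal \<and>
                   choi T = ap *\<^sub>R sp - an *\<^sub>R sn}"

end

theory Submission
  imports Defs
begin


definition Em :: "'n::finite \<Rightarrow> 'n \<Rightarrow> 'n cmat" where
  "Em x y = (\<chi> i j. if i = x \<and> j = y then 1 else 0)"

definition kM :: "'n::finite cmat \<Rightarrow> 'n \<Rightarrow> 'n \<Rightarrow> 'n \<Rightarrow> 'n \<Rightarrow> complex" where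
  "kM M b a e c = M$b$a * cnj (M$e$c)"

definition kT :: "('n::finite cmat \<Rightarrow> 'n cmat) \<Rightarrow> 'n \<Rightarrow> 'n \<Rightarrow> 'n \<Rightarrow> 'n \<Rightarrow> complex" where
  "kT T b a e c = T (Em a c) $ b $ e"

definition ksum :: "(real \<times> 'n::finite cmat) list \<Rightarrow> 'n \<Rightarrow> 'n \<Rightarrow> 'n \<Rightarrow> 'n \<Rightarrow> complex" where
  "ksum L b a e c = (\<Sum>(r,U)\<leftarrow>L. complex_of_real r * kM U b a e c)"

definition cs :: "(real \<times> 'n::finite cmat) list \<Rightarrow> complex^('n \<times> 'n)^('n \<times> 'n)" where
  "cs L = (\<Sum>(r,U)\<leftarrow>L. r *\<^sub>R ketbra (id_tensor_vec U Omega))"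

definition valid :: "(real \<times> 'n::finite cmat) list \<Rightarrow> bool" where
  "valid L \<longleftrightarrow> (\<forall>p\<in>set L. unitary (snd p))"

definition n1 :: "(real \<times> 'n::finite cmat) list \<Rightarrow> real" where
  "n1 L = (\<Sum>(r,U)\<leftarrow>L. \<bar>r\<bar>)"

lemma clin_zero: "clinear_map T \<Longrightarrow> T 0 = 0"
  unfolding clinear_map_def by (metis add_cancel_right_right add_0)

lemma clin_sum: "clinear_map T \<Longrightarrow> T (sum f A) = (\<Sum>x\<in>A. T (f x))"
proof (induction A rule: infinite_finite_induct)
  case (infinite A) then show ?case by (simp add: clin_zero)
next
  case empty then show ?case by (simp add: clin_zero)
next
  case (insert x F) then show ?case by (simp add: clinear_map_def)
qed

lemma if_conj0: "(if P \<and> Q then a else 0) = (if P then if Q then a else 0 else 0)"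
  by simp

lemma sum2_delta:
  "(\<Sum>x\<in>(UNIV::'a::finite set). \<Sum>y\<in>(UNIV::'b::finite set). (if i = x \<and> j = y then f x y else 0)) = f i j"
proof -
  have "\<And>x. (\<Sum>y\<in>(UNIV::'b set). if i = x \<and> j = y then f x y else 0) = (if i = x then f x j else 0)"
    by (cases "i = x") simp_all
  then show ?thesis by simp
qed

lemma times_if01: "a * (if P then 1 else 0) = (if P then a else (0::'a::semiring_1))"
  by simp

lemma sum2_delta':
  "(\<Sum>x\<in>(UNIV::'a::finite set). \<Sum>y\<in>(UNIV::'b::finite set). f x y * (if i = x \<and> j = y then 1 else 0)) = (f i j :: 'c::comm_ring_1)"
proof -
  have "\<And>x. (\<Sum>y\<in>(UNIV::'b set). f x y * (if i = x \<and> j = y then 1 else 0)) = (if i = x then f x j else 0)"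
    by (cases "i = x") (simp_all add: times_if01)
  then show ?thesis by simp
qed

lemma mat_expand: "X = (\<Sum>x\<in>UNIV. \<Sum>y\<in>UNIV. cscale (X$x$y) (Em x y))"
  unfolding vec_eq_iff cscale_def Em_def by (simp add: sum2_delta')

lemma clin_expand:
  assumes "clinear_map T"
  shows "T X $ b $ e = (\<Sum>x\<in>UNIV. \<Sum>y\<in>UNIV. X$x$y * kT T b x e y)"
proof -
  have "T X = (\<Sum>x\<in>UNIV. \<Sum>y\<in>UNIV. cscale (X$x$y) (T (Em x y)))"
    by (subst mat_expand) (simp add: clin_sum[OF assms] assms[unfolded clinear_map_def])
  then show ?thesis by (simp add: cscale_def kT_def)
qed

lemma dpos: "real CARD('n::finite) > 0" by simp

lemma w_sq: "complex_of_real (1 / sqrt (real CARD('n::finite))) * cnj (complex_of_real (1 / sqrt (real CARD('n))))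
   = complex_of_real (1 / real CARD('n))"
proof -
  have "(1 / sqrt (real CARD('n))) * (1 / sqrt (real CARD('n))) = 1 / real CARD('n)"
    by (simp add: real_sqrt_mult[symmetric])
  then show ?thesis by (simp only: complex_cnj_complex_of_real of_real_mult[symmetric])
qed

lemma sqrt_sq_c[simp]: "complex_of_real (sqrt (real n)) * complex_of_real (sqrt (real n)) = of_nat n"
  by (simp flip: of_real_mult)

lemma choi_entry:
  assumes "clinear_map (T :: 'n::finite cmat \<Rightarrow> 'n cmat)"
  shows "choi T $ (a,b) $ (c,e) = complex_of_real (1 / real CARD('n)) * kT T b a e c"
proof -
  have "(\<chi> b' e'. ketbra Omega $ (a, b') $ (c, e')) = cscale (complex_of_real (1 / real CARD('n))) (Em a c :: 'n cmat)"
    by (simp add: vec_eq_iff ketbra_def Omega_def cscale_def Em_def w_sq[symmetric])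
  moreover have "T (cscale (complex_of_real (1 / real CARD('n))) (Em a c)) = cscale (complex_of_real (1 / real CARD('n))) (T (Em a c))"
    using assms unfolding clinear_map_def by blast
  ultimately show ?thesis 
    unfolding choi_def id_tensor_map_def kT_def by (simp only: vec_lambda_beta fst_conv snd_conv) (simp add: cscale_def)
qed

lemma itv_entry: "id_tensor_vec U (Omega :: complex^('n::finite \<times> 'n)) $ (a,b) = U$b$a * complex_of_real (1 / sqrt (real CARD('n)))"
proof -
  have "(\<Sum>c\<in>UNIV. U $ b $ c * Omega $ (a, c)) = (\<Sum>c\<in>UNIV. if c = a then U $ b $ c * complex_of_real (1 / sqrt (real CARD('n))) else 0)"
    by (rule sum.cong) (auto simp: Omega_def)
  then show ?thesis by (simp add: id_tensor_vec_def)
qed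

lemma ketbra_entry: "ketbra (id_tensor_vec U (Omega :: complex^('n::finite \<times> 'n))) $ (a,b) $ (c,e)
   = complex_of_real (1 / real CARD('n)) * kM U b a e c"
proof -
  let ?w = "complex_of_real (1 / sqrt (real CARD('n)))"
  have "ketbra (id_tensor_vec U (Omega :: complex^('n::finite \<times> 'n))) $ (a,b) $ (c,e)
     = (U$b$a * ?w) * cnj (U$e$c * ?w)" by (simp add: ketbra_def itv_entry)
  also have "\<dots> = (?w * cnj ?w) * kM U b a e c" by (simp add: kM_def mult_ac)
  finally show ?thesis by (simp only: w_sq)
qed

lemma scaleR_c: "r *\<^sub>R (z::complex) = complex_of_real r * z"
  by (simp add: scaleR_conv_of_real)

lemma scaleR_entry: "((r::real) *\<^sub>R M) $ i $ j = complex_of_real r * (M $ i $ j :: complex)"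
  by (simp only: scaleR_vec_def vec_lambda_beta) (simp add: scaleR_conv_of_real)

lemma cs_entry: "cs L $ (a,b) $ (c,e) = complex_of_real (1 / real CARD('n::finite)) * ksum (L :: (real \<times> 'n cmat) list) b a e c"
proof (induction L)
  case Nil then show ?case by (simp add: cs_def ksum_def)
next
  case (Cons p L)
  obtain r U where p: "p = (r,U)" by (cases p)
  have "cs (p # L) = r *\<^sub>R ketbra (id_tensor_vec U Omega) + cs L" by (simp add: cs_def p)
  moreover have "ksum (p # L) b a e c = complex_of_real r * kM U b a e c + ksum L b a e c"
    by (simp add: ksum_def p)
  ultimately show ?case using Cons by (simp add: scaleR_entry ketbra_entry scaleR_c algebra_simps)
qed

lemma choi_eq_cs:
  assumes "clinear_map (T :: 'n::finite cmat \<Rightarrow> 'n cmat)"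
  shows "choi T = cs L \<longleftrightarrow> kT T = ksum L"
proof
  assume "choi T = cs L"
  then have "\<And>a b c e. choi T $ (a,b) $ (c,e) = cs L $ (a,b) $ (c,e)" by simp
  then show "kT T = ksum L"
    by (simp add: choi_entry[OF assms] cs_entry fun_eq_iff)
next
  assume "kT T = ksum L"
  then show "choi T = cs L"
    by (simp add: vec_eq_iff choi_entry[OF assms] cs_entry)
qed

definition scaleL :: "real \<Rightarrow> (real \<times> 'n::finite cmat) list \<Rightarrow> (real \<times> 'n cmat) list" where
  "scaleL u L = map (\<lambda>(c,U). (u*c, U)) L"

lemma cs_append: "cs (L @ M) = cs L + cs M" by (simp add: cs_def)
lemma cs_scaleL: "cs (scaleL u L) = u *\<^sub>R cs L"
  by (induction L) (auto simp: cs_def scaleL_def scaleR_add_right)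
lemma n1_append: "n1 (L @ M) = n1 L + n1 M" by (simp add: n1_def)
lemma n1_scaleL: "n1 (scaleL u L) = \<bar>u\<bar> * n1 L"
  by (induction L) (auto simp: n1_def scaleL_def abs_mult algebra_simps)
lemma valid_append: "valid (L @ M) \<longleftrightarrow> valid L \<and> valid M" by (auto simp: valid_def)
lemma valid_scaleL: "valid (scaleL u L) = valid L" by (auto simp: valid_def scaleL_def)
lemma n1_nonneg: "n1 L \<ge> 0" by (induction L) (auto simp: n1_def)
lemma ksum_append: "ksum (L @ M) = (\<lambda>b a e c. ksum L b a e c + ksum M b a e c)"
  by (simp add: ksum_def fun_eq_iff)
lemma ksum_scaleL: "ksum (scaleL u L) = (\<lambda>b a e c. complex_of_real u * ksum L b a e c)"
  by (induction L) (auto simp: ksum_def scaleL_def fun_eq_iff algebra_simps)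

lemma adj_mat1: "adjointm (mat 1 :: 'n::finite cmat) = mat 1"
  by (simp add: vec_eq_iff adjointm_def mat_def)

lemma unitary_mat1: "unitary (mat 1 :: 'n::finite cmat)"
  by (simp add: unitary_def adj_mat1)

lemma K1_in: "ketbra (id_tensor_vec (mat 1 :: 'n::finite cmat) Omega) \<in> Ucal"
  unfolding Ucal_def by (rule hull_inc) (use unitary_mat1 in blast)

lemma gen_in: "unitary U \<Longrightarrow> ketbra (id_tensor_vec U Omega) \<in> Ucal"
  unfolding Ucal_def by (rule hull_inc) blast

lemma decomp:
  fixes L :: "(real \<times> 'n::finite cmat) list"
  assumes "valid L"
  shows "\<exists>ap an sp sn. ap \<ge> 0 \<and> an \<ge> 0 \<and> sp \<in> Ucal \<and> sn \<in> Ucal \<and>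
     cs L = ap *\<^sub>R sp - an *\<^sub>R sn \<and> ap + an = n1 L"
  using assms
proof (induction L)
  case Nil
  show ?case by (rule exI[of _ 0], rule exI[of _ 0]) (auto simp: cs_def n1_def intro!: K1_in)
next
  case (Cons p L)
  obtain r U where p: "p = (r,U)" by (cases p)
  have vU: "unitary U" and vL: "valid L" using Cons.prems p by (auto simp: valid_def)
  let ?K = "ketbra (id_tensor_vec U Omega)"
  have Kin: "?K \<in> Ucal" using gen_in[OF vU] .
  obtain ap an sp sn where h: "ap \<ge> 0" "an \<ge> 0" "sp \<in> Ucal" "sn \<in> Ucal"
     "cs L = ap *\<^sub>R sp - an *\<^sub>R sn" "ap + an = n1 L" using Cons.IH[OF vL] by blast
  have csp: "cs (p # L) = r *\<^sub>R ?K + cs L" and n1p: "n1 (p # L) = \<bar>r\<bar> + n1 L"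
    by (simp_all add: cs_def n1_def p)
  have cvx: "convex (Ucal :: (complex^('n \<times> 'n)^('n \<times> 'n)) set)" unfolding Ucal_def by simp
  show ?case
  proof (cases "r \<ge> 0")
    case True
    show ?thesis
    proof (cases "ap + r = 0")
      case True2: True
      then have "r = 0" "ap = 0" using h(1) \<open>r \<ge> 0\<close> by auto
      then show ?thesis using h csp n1p by (intro exI[of _ ap] exI[of _ an] exI[of _ sp] exI[of _ sn]) auto
    next
      case False
      then have pos: "ap + r > 0" using h(1) True by linarith
      define sp' where "sp' = (ap / (ap + r)) *\<^sub>R sp + (r / (ap + r)) *\<^sub>R ?K"
      have "sp' \<in> Ucal" unfolding sp'_def
        by (rule convexD[OF cvx h(3) Kin]) (use pos h(1) True in \<open>auto simp: add_divide_distrib[symmetric]\<close>)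
      moreover have "(ap + r) *\<^sub>R sp' = ap *\<^sub>R sp + r *\<^sub>R ?K"
        using pos by (simp add: sp'_def scaleR_add_right)
      ultimately show ?thesis using h csp n1p True
        by (intro exI[of _ "ap + r"] exI[of _ an] exI[of _ sp'] exI[of _ sn]) (auto simp: algebra_simps)
    qed
  next
    case False
    then have pos: "an - r > 0" using h(2) by linarith
    define sn' where "sn' = (an / (an - r)) *\<^sub>R sn + (- r / (an - r)) *\<^sub>R ?K"
    have "sn' \<in> Ucal" unfolding sn'_def
      by (rule convexD[OF cvx h(4) Kin]) (use pos h(2) False in \<open>auto simp: diff_divide_distrib[symmetric] intro: divide_nonpos_pos\<close>)
    moreover have "(an - r) *\<^sub>R sn' = an *\<^sub>R sn - r *\<^sub>R ?K"
      using pos by (simp add: sn'_def scaleR_add_right scaleR_diff_right)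
    ultimately show ?thesis using h csp n1p False
      by (intro exI[of _ ap] exI[of _ "an - r"] exI[of _ sp] exI[of _ sn']) (auto simp: algebra_simps)
  qed
qed

definition nset :: "('n::finite cmat \<Rightarrow> 'n cmat) \<Rightarrow> real set" where
  "nset T = {ap + an | ap an sp sn. ap \<ge> 0 \<and> an \<ge> 0 \<and> sp \<in> Ucal \<and> sn \<in> Ucal \<and>
                   choi T = ap *\<^sub>R sp - an *\<^sub>R sn}"

lemma normU_nset: "normU T = Inf (nset T)" by (simp add: normU_def nset_def)

lemma nset_bdd: "bdd_below (nset T)"
  by (rule bdd_belowI[of _ 0]) (auto simp: nset_def)

lemma nset_mem:
  assumes "valid L" "choi T = cs L"
  shows "n1 L \<in> nset T"
proof -
  obtain ap an sp sn where "ap \<ge> 0" "an \<ge> 0" "sp \<in> Ucal" "sn \<in> Ucal"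
     "cs L = ap *\<^sub>R sp - an *\<^sub>R sn" "ap + an = n1 L" using decomp[OF assms(1)] by blast
  then show ?thesis unfolding nset_def using assms(2) by (metis (mono_tags, lifting) mem_Collect_eq)
qed

lemma normU_le: "valid L \<Longrightarrow> choi T = cs L \<Longrightarrow> normU T \<le> n1 L"
  unfolding normU_nset by (rule cInf_lower[OF nset_mem nset_bdd])

lemma normU_nonneg: "valid L \<Longrightarrow> choi T = cs L \<Longrightarrow> normU T \<ge> 0"
  unfolding normU_nset by (rule cInf_greatest) (use nset_mem[of L T] in blast, auto simp: nset_def)

lemma hull_rep:
  fixes s :: "complex^('n::finite \<times> 'n)^('n \<times> 'n)"
  assumes "s \<in> Ucal"
  shows "\<exists>L. valid L \<and> (\<forall>p\<in>set L. fst p \<ge> 0) \<and> n1 L = 1 \<and> cs L = s"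
proof -
  let ?Q = "{cs L | L :: (real \<times> 'n cmat) list. valid L \<and> (\<forall>p\<in>set L. fst p \<ge> 0) \<and> n1 L = 1}"
  have "convex ?Q"
  proof (rule convexI)
    fix x y :: "complex^('n \<times> 'n)^('n \<times> 'n)" and u v :: real
    assume "x \<in> ?Q" "y \<in> ?Q" and uv: "0 \<le> u" "0 \<le> v" "u + v = 1"
    then obtain L M where L: "valid L" "\<forall>p\<in>set L. fst p \<ge> 0" "n1 L = 1" "x = cs L"
      and M: "valid M" "\<forall>p\<in>set M. fst p \<ge> 0" "n1 M = 1" "y = cs M" by blast
    let ?N = "scaleL u L @ scaleL v M"
    have "valid ?N" using L M by (simp add: valid_append valid_scaleL)
    moreover have "\<forall>p\<in>set ?N. fst p \<ge> 0" using L M uv by (auto simp: scaleL_def)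
    moreover have "n1 ?N = 1" using L M uv by (simp add: n1_append n1_scaleL)
    moreover have "cs ?N = u *\<^sub>R x + v *\<^sub>R y" using L M by (simp add: cs_append cs_scaleL)
    ultimately show "u *\<^sub>R x + v *\<^sub>R y \<in> ?Q" by (intro CollectI exI[of _ ?N]) auto
  qed
  moreover have "{ketbra (id_tensor_vec U Omega) | U :: 'n cmat. unitary U} \<subseteq> ?Q"
  proof
    fix x assume "x \<in> {ketbra (id_tensor_vec U Omega) | U :: 'n cmat. unitary U}"
    then obtain U where U: "unitary U" "x = ketbra (id_tensor_vec U Omega)" by blast
    have "valid [(1,U)]" "n1 [(1,U)] = 1" "cs [(1,U)] = x" using U by (auto simp: valid_def n1_def cs_def)
    then show "x \<in> ?Q" by force
  qed
  ultimately have "Ucal \<subseteq> ?Q" unfolding Ucal_def by (simp add: hull_minimal)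
  then show ?thesis using assms by blast
qed

lemma nset_rep:
  assumes "s \<in> nset T"
  shows "\<exists>L. valid L \<and> choi T = cs L \<and> n1 L = s"
proof -
  obtain ap an sp sn where h: "s = ap + an" "ap \<ge> 0" "an \<ge> 0" "sp \<in> Ucal" "sn \<in> Ucal"
    "choi T = ap *\<^sub>R sp - an *\<^sub>R sn" using assms unfolding nset_def by blast
  obtain L1 where L1: "valid L1" "\<forall>p\<in>set L1. fst p \<ge> 0" "n1 L1 = 1" "cs L1 = sp" using hull_rep[OF h(4)] by blast
  obtain L2 where L2: "valid L2" "\<forall>p\<in>set L2. fst p \<ge> 0" "n1 L2 = 1" "cs L2 = sn" using hull_rep[OF h(5)] by blast
  let ?N = "scaleL ap L1 @ scaleL (- an) L2"
  have "valid ?N" using L1 L2 by (simp add: valid_append valid_scaleL)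
  moreover have "choi T = cs ?N" using h L1 L2 by (simp add: cs_append cs_scaleL)
  moreover have "n1 ?N = s" using h L1 L2 by (simp add: n1_append n1_scaleL)
  ultimately show ?thesis by blast
qed

lemma normU_approx:
  assumes "valid L0" "choi T = cs L0" "\<epsilon> > 0"
  shows "\<exists>L. valid L \<and> choi T = cs L \<and> n1 L < normU T + \<epsilon>"
proof -
  have ne: "nset T \<noteq> {}" using nset_mem[OF assms(1,2)] by blast
  have "Inf (nset T) < normU T + \<epsilon>" using assms(3) by (simp add: normU_nset)
  then obtain s where "s \<in> nset T" "s < normU T + \<epsilon>" using cInf_lessD[OF ne] by blast
  then show ?thesis using nset_rep by blast
qed

definition prodL :: "(real \<times> 'n::finite cmat) list \<Rightarrow> (real \<times> 'n cmat) list \<Rightarrow> (real \<times> 'n cmat) list" where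
  "prodL L M = concat (map (\<lambda>(c,U). map (\<lambda>(e,V). (c*e, U ** V)) M) L)"

lemma kM_mult: "(\<Sum>x\<in>UNIV. \<Sum>y\<in>UNIV. kM V x a y c * kM U b x e y) = kM (U ** V) b a e c"
  by (simp add: kM_def matrix_matrix_mult_def sum_product mult_ac)

lemma ksum_Nil[simp]: "ksum [] b a e c = 0" by (simp add: ksum_def)
lemma ksum_Cons[simp]: "ksum ((r,U)#L) b a e c = complex_of_real r * kM U b a e c + ksum L b a e c"
  by (simp add: ksum_def)

lemma ksum_prod1:
  "(\<Sum>x\<in>UNIV. \<Sum>y\<in>UNIV. ksum M x a y c * (complex_of_real r * kM U b x e y))
   = ksum (map (\<lambda>(e,V). (r*e, U ** V)) M) b a e c"
proof (induction M)
  case Nil then show ?case by simp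
next
  case (Cons q M)
  obtain t V where q: "q = (t,V)" by (cases q)
  have "(\<Sum>x\<in>UNIV. \<Sum>y\<in>UNIV. ksum (q # M) x a y c * (complex_of_real r * kM U b x e y))
     = complex_of_real (r * t) * (\<Sum>x\<in>UNIV. \<Sum>y\<in>UNIV. kM V x a y c * kM U b x e y)
       + (\<Sum>x\<in>UNIV. \<Sum>y\<in>UNIV. ksum M x a y c * (complex_of_real r * kM U b x e y))"
    by (simp add: q sum_distrib_left sum.distrib algebra_simps)
  also have "\<dots> = ksum (map (\<lambda>(e,V). (r*e, U ** V)) (q # M)) b a e c"
    by (simp add: kM_mult Cons.IH q)
  finally show ?case .
qed

lemma ksum_prod:
  "(\<Sum>x\<in>UNIV. \<Sum>y\<in>UNIV. ksum M x a y c * ksum L b x e y) = ksum (prodL L M) b a e c"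
proof (induction L)
  case Nil then show ?case by (simp add: prodL_def)
next
  case (Cons p L)
  obtain r U where p: "p = (r,U)" by (cases p)
  have "(\<Sum>x\<in>UNIV. \<Sum>y\<in>UNIV. ksum M x a y c * ksum (p # L) b x e y)
     = (\<Sum>x\<in>UNIV. \<Sum>y\<in>UNIV. ksum M x a y c * (complex_of_real r * kM U b x e y))
       + (\<Sum>x\<in>UNIV. \<Sum>y\<in>UNIV. ksum M x a y c * ksum L b x e y)"
    by (simp add: p sum.distrib algebra_simps)
  also have "\<dots> = ksum (prodL (p # L) M) b a e c"
    by (simp add: ksum_prod1 Cons.IH p prodL_def ksum_append)
  finally show ?case .
qed

lemma adj_mult: "adjointm (U ** V) = adjointm V ** adjointm (U :: 'n::finite cmat)"
  by (simp add: vec_eq_iff adjointm_def matrix_matrix_mult_def mult.commute)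

lemma unitary_mult: "unitary U \<Longrightarrow> unitary V \<Longrightarrow> unitary (U ** V :: 'n::finite cmat)"
  unfolding unitary_def adj_mult
  by (metis matrix_mul_assoc matrix_mul_rid)

lemma valid_prodL: "valid L \<Longrightarrow> valid M \<Longrightarrow> valid (prodL L M)"
  by (fastforce simp: valid_def prodL_def intro!: unitary_mult)

lemma n1_prodL: "n1 (prodL L M) = n1 L * n1 M"
proof (induction L)
  case Nil then show ?case by (simp add: n1_def prodL_def)
next
  case (Cons p L)
  obtain r U where p: "p = (r,U)" by (cases p)
  have "n1 (map (\<lambda>(e,V). (r*e, U ** V)) M) = \<bar>r\<bar> * n1 M"
    by (induction M) (auto simp: n1_def abs_mult algebra_simps)
  then show ?case using Cons by (simp add: p prodL_def n1_def algebra_simps)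
qed

lemma clin_comp: "clinear_map T \<Longrightarrow> clinear_map S \<Longrightarrow> clinear_map (T \<circ> S)"
  by (simp add: clinear_map_def)

lemma kT_comp:
  assumes "clinear_map T"
  shows "kT (T \<circ> S) b a e c = (\<Sum>x\<in>UNIV. \<Sum>y\<in>UNIV. kT S x a y c * kT T b x e y)"
  by (simp add: kT_def clin_expand[OF assms, of "S (Em a c)"])

lemma comp_cs:
  assumes "clinear_map T" "clinear_map S" "choi T = cs L" "choi S = cs M"
  shows "choi (T \<circ> S) = cs (prodL L M)"
proof -
  have kt: "kT T = ksum L" and ks: "kT S = ksum M"
    using assms choi_eq_cs by blast+
  have "kT (T \<circ> S) = ksum (prodL L M)"
    by (simp add: fun_eq_iff kT_comp[OF assms(1)] kt ks ksum_prod)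
  then show ?thesis using choi_eq_cs[OF clin_comp[OF assms(1,2)]] by blast
qed

definition good :: "('n::finite cmat \<Rightarrow> 'n cmat) \<Rightarrow> bool" where
  "good T \<longleftrightarrow> (\<exists>L. valid L \<and> choi T = cs L)"

lemma comp_norm:
  assumes lT: "clinear_map T" and lS: "clinear_map S" and gT: "good T" and gS: "good S"
  shows "good (T \<circ> S) \<and> normU (T \<circ> S) \<le> normU T * normU S"
proof -
  obtain L0 where L0: "valid L0" "choi T = cs L0" using gT good_def by blast
  obtain M0 where M0: "valid M0" "choi S = cs M0" using gS good_def by blast
  have g: "good (T \<circ> S)" unfolding good_def
    using comp_cs[OF lT lS L0(2) M0(2)] valid_prodL[OF L0(1) M0(1)] by blast
  have nT: "normU T \<ge> 0" using normU_nonneg[OF L0] .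
  have nS: "normU S \<ge> 0" using normU_nonneg[OF M0] .
  have key: "normU (T \<circ> S) \<le> normU T * normU S + \<epsilon>" if e: "\<epsilon> > 0" for \<epsilon>
  proof -
    define \<delta> where "\<delta> = min 1 (\<epsilon> / (normU T + normU S + 1))"
    have dpos: "\<delta> > 0" using e nT nS by (simp add: \<delta>_def)
    have d1: "\<delta> \<le> 1" by (simp add: \<delta>_def)
    have Np: "normU T + normU S + 1 > 0" using nT nS by linarith
    have "\<delta> \<le> \<epsilon> / (normU T + normU S + 1)" by (simp add: \<delta>_def)
    then have d2: "\<delta> * (normU T + normU S + 1) \<le> \<epsilon>"
      using Np by (simp add: pos_le_divide_eq)
    obtain L where L: "valid L" "choi T = cs L" "n1 L < normU T + \<delta>" using normU_approx[OF L0 dpos] by blast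
    obtain M where M: "valid M" "choi S = cs M" "n1 M < normU S + \<delta>" using normU_approx[OF M0 dpos] by blast
    have "normU (T \<circ> S) \<le> n1 (prodL L M)"
      using normU_le[OF valid_prodL[OF L(1) M(1)] comp_cs[OF lT lS L(2) M(2)]] .
    also have "\<dots> = n1 L * n1 M" by (rule n1_prodL)
    also have "\<dots> \<le> (normU T + \<delta>) * (normU S + \<delta>)"
      using L(3) M(3) n1_nonneg[of L] n1_nonneg[of M] by (intro mult_mono) auto
    also have "\<dots> = normU T * normU S + \<delta> * (normU T + normU S + \<delta>)" by (simp add: algebra_simps)
    also have "\<dots> \<le> normU T * normU S + \<delta> * (normU T + normU S + 1)"
      using dpos d1 by (intro add_left_mono mult_left_mono) auto
    also have "\<dots> \<le> normU T * normU S + \<epsilon>" using d2 by simp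
    finally show ?thesis .
  qed
  have "normU (T \<circ> S) \<le> normU T * normU S" by (rule field_le_epsilon) (rule key)
  with g show ?thesis by blast
qed




definition ketm :: "complex^'n::finite \<Rightarrow> 'n cmat" where
  "ketm w = (\<chi> i j. w$i * cnj (w$j))"

definition qf :: "'n::finite cmat \<Rightarrow> complex^'n \<Rightarrow> complex" where
  "qf Y v = (\<Sum>a\<in>UNIV. cnj (v$a) * (Y *v v)$a)"

lemma qf_ketm: "qf (ketm w) v = (\<Sum>a\<in>UNIV. cnj (v$a) * w$a) * cnj (\<Sum>a\<in>UNIV. cnj (v$a) * w$a)"
  by (simp add: qf_def ketm_def matrix_vector_mult_def sum_distrib_left sum_product mult_ac)

lemma psd_ketm: "psd_block 1 (\<lambda>i j. ketm w)"
proof -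
  have "Im (qf (ketm w) v) = 0 \<and> Re (qf (ketm w) v) \<ge> 0" for v
    unfolding qf_ketm complex_mult_cnj by simp
  then show ?thesis by (simp add: psd_block_def qf_def Let_def)
qed

lemma psd_qf: "psd_block 1 (\<lambda>i j. Y) \<Longrightarrow> Im (qf Y v) = 0"
  unfolding psd_block_def qf_def Let_def by (drule spec[of _ "\<lambda>_. v"]) simp

definition ev2 :: "'n::finite \<Rightarrow> complex \<Rightarrow> 'n \<Rightarrow> complex^'n" where
  "ev2 x z y = (\<chi> a. (if a = x then 1 else 0) + (if a = y then z else 0))"

lemma sum_dd: fixes x :: "'a::finite" and y :: "'b::finite" shows "(\<Sum>a\<in>UNIV. \<Sum>b\<in>UNIV. (if a = x then u else 0) * (if b = y then v else 0) * K a b) = u * v * (K x y :: complex)"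
proof -
  have "\<And>a b. (if a = x then u else 0) * (if b = y then v else 0) * K a b = (if a = x then if b = y then u * v * K x y else 0 else 0)"
    by simp
  moreover have "\<And>a. (\<Sum>b\<in>UNIV. if a = x then if b = y then u * v * K x y else 0 else 0) = (if a = x then u * v * K x y else 0)"
    by (case_tac "a = x") simp_all
  ultimately show ?thesis by simp
qed

lemma sum2_ev: fixes x y :: "'a::finite" shows "(\<Sum>a\<in>UNIV. \<Sum>b\<in>UNIV. ((if a = x then 1 else 0) + (if a = y then w else 0)) * 
      ((if b = x then 1 else 0) + (if b = y then z else 0)) * K a b)
   = K x x + z * K x y + w * K y x + w * z * (K y y :: complex)"
proof -
  have "\<And>a b. ((if a = x then 1 else 0) + (if a = y then w else 0)) * 
      ((if b = x then 1 else 0) + (if b = y then z else 0)) * K a b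
    = (if a = x then 1 else 0) * (if b = x then 1 else 0) * K a b + (if a = x then 1 else 0) * (if b = y then z else 0) * K a b
      + (if a = y then w else 0) * (if b = x then 1 else 0) * K a b + (if a = y then w else 0) * (if b = y then z else 0) * K a b"
    by (simp only: distrib_left distrib_right add_ac)
  then show ?thesis by (simp only: sum.distrib sum_dd) simp
qed

lemma ev2_nth: "ev2 x z y $ a = (if a = x then 1 else 0) + (if a = y then z else 0)"
  by (simp add: ev2_def)
lemma ev2_cnj: "cnj (ev2 x z y $ a) = (if a = x then 1 else 0) + (if a = y then cnj z else 0)"
  by (simp add: ev2_def)

lemma qf_alt: "qf Y v = (\<Sum>a\<in>UNIV. \<Sum>b\<in>UNIV. cnj (v$a) * v$b * Y$a$b)"
  by (simp add: qf_def matrix_vector_mult_def sum_distrib_left mult_ac)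

lemma qf_ev2: "qf Y (ev2 x z y) = Y$x$x + z * Y$x$y + cnj z * Y$y$x + cnj z * z * Y$y$y"
  unfolding qf_alt ev2_cnj unfolding ev2_nth by (rule sum2_ev)

lemma herm_of_qf:
  assumes "\<And>v. Im (qf Y v) = 0"
  shows "Y$y$x = cnj (Y$x$y)"
proof -
  have 0: "Im (Y$x$x) = 0" "Im (Y$y$y) = 0" using assms[of "ev2 x 0 y"] assms[of "ev2 y 0 x"] by (simp_all add: qf_ev2)
  have 1: "Im (Y$x$y + Y$y$x) = 0" using assms[of "ev2 x 1 y"] 0 by (simp add: qf_ev2)
  have 2: "Re (Y$x$y) = Re (Y$y$x)" using assms[of "ev2 x \<i> y"] 0 by (simp add: qf_ev2)
  show ?thesis using 1 2 by (simp add: complex_eq_iff)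
qed

lemma cnj_if0[simp]: "cnj (if P then x else 0) = (if P then cnj x else 0)" by simp
lemma if01_times: "(if P then 1 else 0) * a = (if P then a else (0::'a::semiring_1))" by simp

lemma ketm_ev2_T:
  assumes "clinear_map T"
  shows "T (ketm (ev2 a z c)) $ b $ e = kT T b a e a + cnj z * kT T b a e c + z * kT T b c e a + z * cnj z * kT T b c e c"
proof -
  have "T (ketm (ev2 a z c)) $ b $ e = (\<Sum>x\<in>UNIV. \<Sum>y\<in>UNIV. ((if x = a then 1 else 0) + (if x = c then z else 0)) *
      ((if y = a then 1 else 0) + (if y = c then cnj z else 0)) * kT T b x e y)"
    unfolding clin_expand[OF assms] ketm_def vec_lambda_beta unfolding ev2_cnj unfolding ev2_nth by simp
  then show ?thesis by (simp only: sum2_ev)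
qed

lemma kT_herm:
  assumes lin: "clinear_map T" and cp: "completely_positive T"
  shows "kT T e c b a = cnj (kT T b a e c)"
proof -
  have herm: "T (ketm w) $ y $ x = cnj (T (ketm w) $ x $ y)" for w x y
  proof (rule herm_of_qf)
    fix v
    have "psd_block 1 (\<lambda>i j. T (ketm w))" using cp psd_ketm[of w] unfolding completely_positive_def by blast
    then show "Im (qf (T (ketm w)) v) = 0" by (rule psd_qf)
  qed
  have H0: "kT T e a b a = cnj (kT T b a e a)" for a b e
    using herm[of "ev2 a 0 a" e b] by (simp add: ketm_ev2_T[OF lin])
  define P where "P = kT T e c b a"
  define Q where "Q = kT T e a b c"
  define p where "p = cnj (kT T b a e c)"
  define q where "q = cnj (kT T b c e a)"
  have E1: "Q + P = p + q"
    using herm[of "ev2 a 1 c" e b] H0[of e a b] H0[of e c b]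
    by (simp add: ketm_ev2_T[OF lin] P_def Q_def p_def q_def)
  have E2: "- \<i> * Q + \<i> * P = \<i> * p - \<i> * q"
    using herm[of "ev2 a \<i> c" e b] H0[of e a b] H0[of e c b]
    by (simp add: ketm_ev2_T[OF lin] P_def Q_def p_def q_def algebra_simps)
  have E3: "\<i> * (P - Q) = \<i> * (p - q)" using E2 by (simp add: algebra_simps)
  have E4: "P - Q = p - q" using E3 by simp
  have "(Q + P) + (P - Q) = (p + q) + (p - q)" using E1 E4 by simp
  then have "2 * P = 2 * p" by (simp add: algebra_simps)
  then have "P = p" by simp
  then show ?thesis by (simp add: P_def p_def)
qed

lemma kT_unital:
  assumes "clinear_map T" "T (mat 1) = mat 1"
  shows "(\<Sum>a\<in>UNIV. kT T b a e a) = (if b = e then 1 else 0)"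
proof -
  have "T (mat 1) $ b $ e = (\<Sum>x\<in>UNIV. \<Sum>y\<in>UNIV. (if x = y then 1 else 0) * kT T b x e y)"
    unfolding clin_expand[OF assms(1)] by (simp add: mat_def)
  also have "\<dots> = (\<Sum>a\<in>UNIV. kT T b a e a)"
    by (rule sum.cong) (simp_all add: if01_times)
  finally show ?thesis using assms(2) by (simp add: mat_def)
qed

lemma kT_tp:
  assumes "\<And>A. trace_m (T A) = trace_m A"
  shows "(\<Sum>b\<in>UNIV. kT T b a b c) = (if a = c then 1 else 0)"
proof -
  have "(\<Sum>b\<in>UNIV. kT T b a b c) = trace_m (T (Em a c))" by (simp add: trace_m_def kT_def)
  also have "\<dots> = trace_m (Em a c :: 'a cmat)" by (rule assms)
  also have "\<dots> = (if a = c then 1 else 0)"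
    by (cases "a = c") (auto simp: trace_m_def Em_def intro!: sum.neutral)
  finally show ?thesis .
qed




definition KS :: "('n::finite \<Rightarrow> 'n \<Rightarrow> 'n \<Rightarrow> 'n \<Rightarrow> complex) set" where
  "KS = {K. \<exists>L. valid L \<and> K = ksum L}"

lemma ks_add: "K1 \<in> KS \<Longrightarrow> K2 \<in> KS \<Longrightarrow> (\<lambda>b a e c. K1 b a e c + K2 b a e c) \<in> KS"
proof -
  assume "K1 \<in> KS" "K2 \<in> KS"
  then obtain L M where "valid L" "K1 = ksum L" "valid M" "K2 = ksum M" unfolding KS_def by blast
  then have "valid (L @ M)" "(\<lambda>b a e c. K1 b a e c + K2 b a e c) = ksum (L @ M)"
    by (simp_all add: valid_append ksum_append)
  then show ?thesis unfolding KS_def by blast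
qed

lemma ks_scale: "K \<in> KS \<Longrightarrow> (\<lambda>b a e c. complex_of_real r * K b a e c) \<in> KS"
proof -
  assume "K \<in> KS"
  then obtain L where "valid L" "K = ksum L" unfolding KS_def by blast
  then have "valid (scaleL r L)" "(\<lambda>b a e c. complex_of_real r * K b a e c) = ksum (scaleL r L)"
    by (simp_all add: valid_scaleL ksum_scaleL)
  then show ?thesis unfolding KS_def by blast
qed

lemma ks_unit: "unitary U \<Longrightarrow> kM U \<in> KS"
  unfolding KS_def by (rule CollectI, rule exI[of _ "[(1,U)]"]) (simp add: valid_def fun_eq_iff)

lemma ks_zero: "(\<lambda>b a e c. 0) \<in> KS"
  unfolding KS_def by (rule CollectI, rule exI[of _ "[]"]) (simp add: valid_def fun_eq_iff)

lemma ks_diff: "K1 \<in> KS \<Longrightarrow> K2 \<in> KS \<Longrightarrow> (\<lambda>b a e c. K1 b a e c - K2 b a e c) \<in> KS"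
  using ks_add[OF _ ks_scale[of K2 "-1"], of K1] by simp

lemma ks_cong: "K \<in> KS \<Longrightarrow> (\<And>b a e c. K b a e c = K' b a e c) \<Longrightarrow> K' \<in> KS"
proof -
  assume "K \<in> KS" "\<And>b a e c. K b a e c = K' b a e c"
  then have "K = K'" by (simp add: fun_eq_iff)
  then show "K' \<in> KS" using \<open>K \<in> KS\<close> by simp
qed

lemma ks_sum:
  assumes "finite A" "\<And>i. i \<in> A \<Longrightarrow> f i \<in> KS"
  shows "(\<lambda>b a e c. \<Sum>i\<in>A. f i b a e c) \<in> KS"
  using assms
proof (induction A rule: finite_induct)
  case empty then show ?case by (simp add: ks_zero)
next
  case (insert x F)
  then show ?case using ks_add[of "f x" "\<lambda>b a e c. \<Sum>i\<in>F. f i b a e c"] by simp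
qed

definition u2 :: "complex \<Rightarrow> complex \<Rightarrow> complex \<Rightarrow> complex \<Rightarrow> bool" where
  "u2 p q r t \<longleftrightarrow> p*cnj p + q*cnj q = 1 \<and> r*cnj r + t*cnj t = 1 \<and> p*cnj r + q*cnj t = 0 \<and>
     cnj p*p + cnj r*r = 1 \<and> cnj q*q + cnj t*t = 1 \<and> cnj p*q + cnj r*t = 0"

definition ublk :: "'n::finite \<Rightarrow> 'n \<Rightarrow> 'n \<Rightarrow> 'n \<Rightarrow> ('n \<Rightarrow> 'n) \<Rightarrow> complex \<Rightarrow> complex \<Rightarrow> complex \<Rightarrow> complex \<Rightarrow> 'n cmat" where
  "ublk x1 x2 y1 y2 \<sigma> p q r t = (\<chi> i j. if j = y1 then (if i = x1 then p else if i = x2 then r else 0)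
     else if j = y2 then (if i = x1 then q else if i = x2 then t else 0) else (if i = \<sigma> j then 1 else 0))"

definition blk :: "'n::finite \<Rightarrow> 'n \<Rightarrow> 'n \<Rightarrow> 'n \<Rightarrow> complex \<Rightarrow> complex \<Rightarrow> complex \<Rightarrow> complex \<Rightarrow> 'n cmat" where
  "blk x1 x2 y1 y2 p q r t = (\<chi> i j. if j = y1 then (if i = x1 then p else if i = x2 then r else 0)
     else if j = y2 then (if i = x1 then q else if i = x2 then t else 0) else 0)"

lemma sum_split2:
  fixes f :: "'a::finite \<Rightarrow> complex"
  assumes "y1 \<noteq> y2"
  shows "sum f UNIV = f y1 + f y2 + sum f (UNIV - {y1,y2})"
proof -
  have "UNIV = insert y1 (insert y2 (UNIV - {y1,y2}))" by auto
  then have "sum f UNIV = sum f (insert y1 (insert y2 (UNIV - {y1,y2})))" by simp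
  also have "\<dots> = f y1 + f y2 + sum f (UNIV - {y1,y2})" using assms by (simp add: add.assoc)
  finally show ?thesis .
qed

lemma sum_perm_delta:
  fixes \<sigma> :: "'a::finite \<Rightarrow> 'a"
  assumes "bij \<sigma>"
  shows "(\<Sum>j\<in>A. (if i = \<sigma> j then 1 else 0) * cnj (if k = \<sigma> j then 1 else 0))
     = (if inv \<sigma> i \<in> A \<and> i = k then (1::complex) else 0)"
proof -
  have "\<And>j. (if i = \<sigma> j then 1 else 0) * cnj (if k = \<sigma> j then 1 else 0)
      = (if j = inv \<sigma> i then (if i = k then 1 else 0) else (0::complex))"
    using assms by (auto simp: bij_inv_eq_iff)
  then show ?thesis by (auto simp: sum.delta')
qed

lemma unitary_ublk:
  assumes x: "x1 \<noteq> x2" and y: "y1 \<noteq> y2" and bij: "bij \<sigma>" and s1: "\<sigma> y1 = x1" and s2: "\<sigma> y2 = x2"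
    and u: "u2 p q r t"
  shows "unitary (ublk x1 x2 y1 y2 \<sigma> p q r t)"
proof -
  let ?U = "ublk x1 x2 y1 y2 \<sigma> p q r t"
  have inj: "\<And>a b. \<sigma> a = \<sigma> b \<longleftrightarrow> a = b" using bij by (meson bij_is_inj inj_eq)
  have iv1: "inv \<sigma> x1 = y1" and iv2: "inv \<sigma> x2 = y2" using bij s1 s2 by (metis bij_inv_eq_iff)+
  have ie1: "inv \<sigma> i = y1 \<longleftrightarrow> i = x1" for i using bij s1 by (metis bij_inv_eq_iff)
  have ie2: "inv \<sigma> i = y2 \<longleftrightarrow> i = x2" for i using bij s2 by (metis bij_inv_eq_iff)
  have ivn: "inv \<sigma> i \<in> UNIV - {y1,y2} \<longleftrightarrow> i \<noteq> x1 \<and> i \<noteq> x2" for i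
    using ie1 ie2 by auto
  from u have u1: "p*cnj p + q*cnj q = 1" and u2': "r*cnj r + t*cnj t = 1" and u3: "p*cnj r + q*cnj t = 0"
    and u4: "cnj p*p + cnj r*r = 1" and u5: "cnj q*q + cnj t*t = 1" and u6: "cnj p*q + cnj r*t = 0"
    unfolding u2_def by auto
  have u3': "r*cnj p + t*cnj q = 0" using arg_cong[OF u3, of cnj] by (simp add: mult.commute)
  have u6': "cnj q*p + cnj t*r = 0" using arg_cong[OF u6, of cnj] by (simp add: mult.commute)
  have row: "(\<Sum>j\<in>UNIV. ?U$i$j * cnj (?U$k$j)) = (if i = k then 1 else 0)" for i k
  proof -
    have rest: "(\<Sum>j\<in>UNIV - {y1,y2}. ?U$i$j * cnj (?U$k$j)) = (if inv \<sigma> i \<in> UNIV - {y1,y2} \<and> i = k then 1 else 0)"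
    proof -
      have "(\<Sum>j\<in>UNIV - {y1,y2}. ?U$i$j * cnj (?U$k$j)) = 
         (\<Sum>j\<in>UNIV - {y1,y2}. (if i = \<sigma> j then 1 else 0) * cnj (if k = \<sigma> j then 1 else 0))"
        by (rule sum.cong) (auto simp: ublk_def)
      then show ?thesis using sum_perm_delta[OF bij] by simp
    qed
    show ?thesis
      unfolding sum_split2[OF y] rest ivn using x y u1 u2' u3 u3'
      by (auto simp: ublk_def)
  qed
  have col: "(\<Sum>i\<in>UNIV. cnj (?U$i$j) * ?U$i$l) = (if j = l then 1 else 0)" for j l
  proof (cases "j = y1 \<or> j = y2")
    case False
    have n1: "\<sigma> j \<noteq> x1" "\<sigma> j \<noteq> x2" using False inj s1 s2 by metis+
    have "(\<Sum>i\<in>UNIV. cnj (?U$i$j) * ?U$i$l) = (\<Sum>i\<in>UNIV. if i = \<sigma> j then ?U$i$l else 0)"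
      by (rule sum.cong) (use False in \<open>auto simp: ublk_def\<close>)
    also have "\<dots> = ?U$(\<sigma> j)$l" by simp
    also have "\<dots> = (if l = y1 then 0 else if l = y2 then 0 else if \<sigma> j = \<sigma> l then 1 else 0)"
      using n1 by (simp add: ublk_def)
    also have "\<dots> = (if j = l then 1 else 0)" using False inj by auto
    finally show ?thesis .
  next
    case True
    have rest: "(\<Sum>i\<in>UNIV - {x1,x2}. cnj (?U$i$j) * ?U$i$l) = 0"
      by (rule sum.neutral) (use True in \<open>auto simp: ublk_def\<close>)
    have l1: "?U$x1$l = 0" "?U$x2$l = 0" if "l \<noteq> y1" "l \<noteq> y2"
    proof -
      have "x1 \<noteq> \<sigma> l" "x2 \<noteq> \<sigma> l" using that inj s1 s2 by metis+
      then show "?U$x1$l = 0" "?U$x2$l = 0" using that by (simp_all add: ublk_def)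
    qed
    show ?thesis
      unfolding sum_split2[OF x, of "\<lambda>i. cnj (?U$i$j) * ?U$i$l"] rest
      using True x y u4 u5 u6 u6' l1 by (auto simp: ublk_def)
  qed
  show ?thesis unfolding unitary_def
    by (simp add: vec_eq_iff matrix_matrix_mult_def adjointm_def mat_def row col)
qed

definition sw :: "'a \<Rightarrow> 'a \<Rightarrow> 'a \<Rightarrow> 'a" where
  "sw a b x = (if x = a then b else if x = b then a else x)"

lemma sw_invol: "sw a b (sw a b x) = x" by (simp add: sw_def)
lemma bij_sw: "bij (sw a b)" by (metis bij_def inj_def surj_def sw_invol)

lemma perm_exists:
  assumes "x1 \<noteq> x2" "y1 \<noteq> y2"
  shows "\<exists>\<sigma>::'a \<Rightarrow> 'a. bij \<sigma> \<and> \<sigma> y1 = x1 \<and> \<sigma> y2 = x2"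
proof -
  define c where "c = sw y1 x1 y2"
  have c1: "c \<noteq> x1" using assms(2) unfolding c_def sw_def by auto
  define \<sigma> where "\<sigma> = sw c x2 \<circ> sw y1 x1"
  have "bij \<sigma>" unfolding \<sigma>_def by (rule bij_comp) (rule bij_sw)+
  moreover have "\<sigma> y1 = x1" using c1 assms(1) by (simp add: \<sigma>_def sw_def)
  moreover have "\<sigma> y2 = x2"
  proof -
    have "\<sigma> y2 = sw c x2 c" by (simp add: \<sigma>_def c_def)
    also have "\<dots> = x2" by (simp add: sw_def)
    finally show ?thesis .
  qed
  ultimately show ?thesis by blast
qed

lemma u2_neg: "u2 (-p) (-q) (-r) (-t) = u2 p q r t" by (simp add: u2_def)

lemma ublk_split: "ublk x1 x2 y1 y2 \<sigma> p q r t $ i $ j = blk x1 x2 y1 y2 p q r t $ i $ j + ublk x1 x2 y1 y2 \<sigma> 0 0 0 0 $ i $ j"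
  by (simp add: ublk_def blk_def)
lemma ublk_split_neg: "ublk x1 x2 y1 y2 \<sigma> (-p) (-q) (-r) (-t) $ i $ j = - blk x1 x2 y1 y2 p q r t $ i $ j + ublk x1 x2 y1 y2 \<sigma> 0 0 0 0 $ i $ j"
  by (simp add: ublk_def blk_def)

lemma blk_half: "kM (blk x1 x2 y1 y2 p q r t) b a e c =
   complex_of_real (1/2) * (kM (ublk x1 x2 y1 y2 \<sigma> p q r t) b a e c + kM (ublk x1 x2 y1 y2 \<sigma> (-p) (-q) (-r) (-t)) b a e c)
   - kM (ublk x1 x2 y1 y2 \<sigma> 0 0 0 0) b a e c"
  unfolding kM_def ublk_split[of x1 x2 y1 y2 \<sigma> p q r t] ublk_split_neg
  by (simp add: algebra_simps)

lemma blk_diff: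
  assumes x: "x1 \<noteq> x2" and y: "y1 \<noteq> y2" and u: "u2 p q r t" and u': "u2 p' q' r' t'"
  shows "(\<lambda>b a e c. kM (blk x1 x2 y1 y2 p q r t) b a e c - kM (blk x1 x2 y1 y2 p' q' r' t') b a e c) \<in> KS"
proof -
  obtain \<sigma> :: "'a \<Rightarrow> 'a" where s: "bij \<sigma>" "\<sigma> y1 = x1" "\<sigma> y2 = x2" using perm_exists[OF x y] by blast
  let ?U = "\<lambda>p q r t. kM (ublk x1 x2 y1 y2 \<sigma> p q r t)"
  have k: "?U p q r t \<in> KS" "?U (-p) (-q) (-r) (-t) \<in> KS" "?U p' q' r' t' \<in> KS" "?U (-p') (-q') (-r') (-t') \<in> KS"
    using u u' by (auto intro!: ks_unit unitary_ublk[OF x y s] simp: u2_neg)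
  have "(\<lambda>b a e c. complex_of_real (1/2) * ((?U p q r t b a e c + ?U (-p) (-q) (-r) (-t) b a e c)
     - (?U p' q' r' t' b a e c + ?U (-p') (-q') (-r') (-t') b a e c))) \<in> KS"
    by (rule ks_scale, rule ks_diff; rule ks_add) (use k in auto)
  then show ?thesis
    by (rule ks_cong) (simp add: blk_half[of _ _ _ _ _ _ _ _ _ _ _ _ \<sigma>] algebra_simps)
qed

definition dl :: "'n \<Rightarrow> 'n \<Rightarrow> 'n \<Rightarrow> 'n \<Rightarrow> 'n \<Rightarrow> 'n \<Rightarrow> 'n \<Rightarrow> 'n \<Rightarrow> complex" where
  "dl b a e c b' a' e' c' = (if b' = b \<and> a' = a \<and> e' = e \<and> c' = c then 1 else 0)"

definition ind :: "bool \<Rightarrow> complex" where "ind P = (if P then 1 else 0)"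

lemma cnj_ind[simp]: "cnj (ind P) = ind P" by (simp add: ind_def)

lemma blk_ind: "x1 \<noteq> x2 \<Longrightarrow> y1 \<noteq> y2 \<Longrightarrow> blk x1 x2 y1 y2 p q r t $ i $ j
   = p * ind (i = x1 \<and> j = y1) + q * ind (i = x1 \<and> j = y2) + r * ind (i = x2 \<and> j = y1) + t * ind (i = x2 \<and> j = y2)"
  by (auto simp: blk_def ind_def)

lemma dl_ind: "dl b a e c b' a' e' c' = ind (b' = b \<and> a' = a) * ind (e' = e \<and> c' = c)"
  by (simp add: dl_def ind_def)

lemma combE1:
  assumes "x1 \<noteq> x2" "y1 \<noteq> y2"
  shows "kM (blk x1 x2 y1 y2 p 0 0 t) b a e c - kM (blk x1 x2 y1 y2 p 0 0 (-t)) b a e c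
    = 2 * (p * cnj t * dl x1 y1 x2 y2 b a e c + t * cnj p * dl x2 y2 x1 y1 b a e c)"
  unfolding kM_def blk_ind[OF assms] dl_ind by (simp add: algebra_simps)

lemma combE2:
  assumes "x1 \<noteq> x2" "y1 \<noteq> y2"
  shows "(kM (blk x1 x2 y1 y2 p q r t) b a e c - kM (blk x1 x2 y1 y2 p q (-r) (-t)) b a e c)
     + (kM (blk x1 x2 y1 y2 p (-q) r (-t)) b a e c - kM (blk x1 x2 y1 y2 p (-q) (-r) t) b a e c)
    = 4 * (p * cnj r * dl x1 y1 x2 y1 b a e c + q * cnj t * dl x1 y2 x2 y2 b a e c
         + r * cnj p * dl x2 y1 x1 y1 b a e c + t * cnj q * dl x2 y2 x1 y2 b a e c)"
  unfolding kM_def blk_ind[OF assms] dl_ind by (simp add: algebra_simps)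

lemma combE3:
  assumes "x1 \<noteq> x2" "y1 \<noteq> y2"
  shows "(kM (blk x1 x2 y1 y2 p q r t) b a e c - kM (blk x1 x2 y1 y2 p (-q) r (-t)) b a e c)
     + (kM (blk x1 x2 y1 y2 p q (-r) (-t)) b a e c - kM (blk x1 x2 y1 y2 p (-q) (-r) t) b a e c)
    = 4 * (p * cnj q * dl x1 y1 x1 y2 b a e c + r * cnj t * dl x2 y1 x2 y2 b a e c
         + q * cnj p * dl x1 y2 x1 y1 b a e c + t * cnj r * dl x2 y2 x2 y1 b a e c)"
  unfolding kM_def blk_ind[OF assms] dl_ind by (simp add: algebra_simps)

lemma combE4:
  assumes "x1 \<noteq> x2" "y1 \<noteq> y2"
  shows "(kM (blk x1 x2 y1 y2 1 0 0 1) b a e c - kM (blk x1 x2 y1 y2 0 1 1 0) b a e c)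
     + (kM (blk x1 x2 y1 y2 1 0 0 (-1)) b a e c - kM (blk x1 x2 y1 y2 0 1 (-1) 0) b a e c)
    = 2 * (dl x1 y1 x1 y1 b a e c + dl x2 y2 x2 y2 b a e c - dl x1 y2 x1 y2 b a e c - dl x2 y1 x2 y1 b a e c)"
  unfolding kM_def blk_ind[OF assms] dl_ind by (simp add: algebra_simps)

lemma u2_flips: "u2 p q r t \<Longrightarrow> u2 p q (-r) (-t) \<and> u2 p (-q) r (-t) \<and> u2 p (-q) (-r) t"
  by (simp add: u2_def add_eq_0_iff)

lemma blk_diff2:
  assumes "x1 \<noteq> x2" "y1 \<noteq> y2" "u2 p1 q1 r1 t1" "u2 p2 q2 r2 t2" "u2 p3 q3 r3 t3" "u2 p4 q4 r4 t4"
  shows "(\<lambda>b a e c. complex_of_real w * ((kM (blk x1 x2 y1 y2 p1 q1 r1 t1) b a e c - kM (blk x1 x2 y1 y2 p2 q2 r2 t2) b a e c)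
      + (kM (blk x1 x2 y1 y2 p3 q3 r3 t3) b a e c - kM (blk x1 x2 y1 y2 p4 q4 r4 t4) b a e c))) \<in> KS"
  by (rule ks_scale, rule ks_add; rule blk_diff) (use assms in auto)

lemma E1gen:
  assumes x: "x1 \<noteq> x2" and y: "y1 \<noteq> y2" and u: "u2 p 0 0 t"
  shows "(\<lambda>b a e c. complex_of_real w * (2 * (p * cnj t * dl x1 y1 x2 y2 b a e c + t * cnj p * dl x2 y2 x1 y1 b a e c))) \<in> KS"
proof -
  have "(\<lambda>b a e c. complex_of_real w * (kM (blk x1 x2 y1 y2 p 0 0 t) b a e c - kM (blk x1 x2 y1 y2 p 0 0 (-t)) b a e c)) \<in> KS"
    by (rule ks_scale, rule blk_diff[OF x y u]) (use u in \<open>simp add: u2_def\<close>)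
  then show ?thesis by (rule ks_cong) (simp only: combE1[OF x y])
qed

lemma E2gen:
  assumes x: "x1 \<noteq> x2" and y: "y1 \<noteq> y2" and u: "u2 p q r t"
  shows "(\<lambda>b a e c. complex_of_real w * (4 * (p * cnj r * dl x1 y1 x2 y1 b a e c + q * cnj t * dl x1 y2 x2 y2 b a e c
         + r * cnj p * dl x2 y1 x1 y1 b a e c + t * cnj q * dl x2 y2 x1 y2 b a e c))) \<in> KS"
proof -
  have "(\<lambda>b a e c. complex_of_real w * ((kM (blk x1 x2 y1 y2 p q r t) b a e c - kM (blk x1 x2 y1 y2 p q (-r) (-t)) b a e c)
     + (kM (blk x1 x2 y1 y2 p (-q) r (-t)) b a e c - kM (blk x1 x2 y1 y2 p (-q) (-r) t) b a e c))) \<in> KS"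
    by (rule blk_diff2[OF x y u]) (use u2_flips[OF u] in auto)
  then show ?thesis by (rule ks_cong) (simp only: combE2[OF x y])
qed

lemma E3gen:
  assumes x: "x1 \<noteq> x2" and y: "y1 \<noteq> y2" and u: "u2 p q r t"
  shows "(\<lambda>b a e c. complex_of_real w * (4 * (p * cnj q * dl x1 y1 x1 y2 b a e c + r * cnj t * dl x2 y1 x2 y2 b a e c
         + q * cnj p * dl x1 y2 x1 y1 b a e c + t * cnj r * dl x2 y2 x2 y1 b a e c))) \<in> KS"
proof -
  have "(\<lambda>b a e c. complex_of_real w * ((kM (blk x1 x2 y1 y2 p q r t) b a e c - kM (blk x1 x2 y1 y2 p (-q) r (-t)) b a e c)
     + (kM (blk x1 x2 y1 y2 p q (-r) (-t)) b a e c - kM (blk x1 x2 y1 y2 p (-q) (-r) t) b a e c))) \<in> KS"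
    by (rule blk_diff2[OF x y u]) (use u2_flips[OF u] in auto)
  then show ?thesis by (rule ks_cong) (simp only: combE3[OF x y])
qed

lemma E4gen:
  assumes x: "x1 \<noteq> x2" and y: "y1 \<noteq> y2"
  shows "(\<lambda>b a e c. complex_of_real w * (2 * (dl x1 y1 x1 y1 b a e c + dl x2 y2 x2 y2 b a e c - dl x1 y2 x1 y2 b a e c - dl x2 y1 x2 y1 b a e c))) \<in> KS"
proof -
  have "(\<lambda>b a e c. complex_of_real w * ((kM (blk x1 x2 y1 y2 1 0 0 1) b a e c - kM (blk x1 x2 y1 y2 0 1 1 0) b a e c)
     + (kM (blk x1 x2 y1 y2 1 0 0 (-1)) b a e c - kM (blk x1 x2 y1 y2 0 1 (-1) 0) b a e c))) \<in> KS"
    by (rule blk_diff2[OF x y]) (auto simp: u2_def)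
  then show ?thesis by (rule ks_cong) (simp only: combE4[OF x y])
qed

lemma E1r:
  assumes "b \<noteq> e" "a \<noteq> c"
  shows "(\<lambda>b' a' e' c'. dl b a e c b' a' e' c' + dl e c b a b' a' e' c') \<in> KS"
proof -
  have u: "u2 1 0 0 1" by (simp add: u2_def algebra_simps)
  show ?thesis using E1gen[OF assms u, of "1/2"] by (rule ks_cong) (simp add: algebra_simps)
qed

lemma E1i:
  assumes "b \<noteq> e" "a \<noteq> c"
  shows "(\<lambda>b' a' e' c'. \<i> * dl b a e c b' a' e' c' - \<i> * dl e c b a b' a' e' c') \<in> KS"
proof -
  have u: "u2 \<i> 0 0 1" by (simp add: u2_def algebra_simps)
  show ?thesis using E1gen[OF assms u, of "1/2"] by (rule ks_cong) (simp add: algebra_simps)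
qed

lemma E2r:
  assumes "b \<noteq> e" "a \<noteq> s"
  shows "(\<lambda>b' a' e' c'. (dl b a e a b' a' e' c' - dl b s e s b' a' e' c') + (dl e a b a b' a' e' c' - dl e s b s b' a' e' c')) \<in> KS"
proof -
  have u: "u2 (3/5) (4/5) (4/5) (-3/5)" by (simp add: u2_def algebra_simps)
  show ?thesis using E2gen[OF assms u, of "25/48"] by (rule ks_cong) (simp add: algebra_simps)
qed

lemma E2i:
  assumes "b \<noteq> e" "a \<noteq> s"
  shows "(\<lambda>b' a' e' c'. \<i> * (dl b a e a b' a' e' c' - dl b s e s b' a' e' c') - \<i> * (dl e a b a b' a' e' c' - dl e s b s b' a' e' c')) \<in> KS"
proof -
  have u: "u2 (3/5) (4/5) (4*\<i>/5) (-3*\<i>/5)" by (simp add: u2_def algebra_simps)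
  show ?thesis using E2gen[OF assms u, of "-25/48"] by (rule ks_cong) (simp add: algebra_simps)
qed

lemma E3r:
  assumes "b \<noteq> r" "a \<noteq> c"
  shows "(\<lambda>b' a' e' c'. (dl b a b c b' a' e' c' - dl r a r c b' a' e' c') + (dl b c b a b' a' e' c' - dl r c r a b' a' e' c')) \<in> KS"
proof -
  have u: "u2 (3/5) (4/5) (4/5) (-3/5)" by (simp add: u2_def algebra_simps)
  show ?thesis using E3gen[OF assms u, of "25/48"] by (rule ks_cong) (simp add: algebra_simps)
qed

lemma E3i:
  assumes "b \<noteq> r" "a \<noteq> c"
  shows "(\<lambda>b' a' e' c'. \<i> * (dl b a b c b' a' e' c' - dl r a r c b' a' e' c') - \<i> * (dl b c b a b' a' e' c' - dl r c r a b' a' e' c')) \<in> KS"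
proof -
  have u: "u2 (3/5) (4*\<i>/5) (4/5) (-3*\<i>/5)" by (simp add: u2_def algebra_simps)
  show ?thesis using E3gen[OF assms u, of "-25/48"] by (rule ks_cong) (simp add: algebra_simps)
qed

lemma E4:
  assumes "b \<noteq> r" "a \<noteq> s"
  shows "(\<lambda>b' a' e' c'. dl b a b a b' a' e' c' - dl b s b s b' a' e' c' - dl r a r a b' a' e' c' + dl r s r s b' a' e' c') \<in> KS"
  using E4gen[OF assms, of "1/2"] by (rule ks_cong) (simp add: algebra_simps)

lemma dl_nested: "dl b a e c b' a' e' c' = (if b' = b then if a' = a then if e' = e then if c' = c then 1 else 0 else 0 else 0 else 0)"
  by (simp add: dl_def)

lemma times_if0: "x * (if P then y else 0) = (if P then x * y else (0::complex))" by simp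
lemma sum_if_const: "(\<Sum>c\<in>A. if P then Y c else 0) = (if P then (\<Sum>c\<in>A. Y c) else (0::complex))"
  by (cases P) simp_all

lemma P1: "(\<Sum>b\<in>UNIV. \<Sum>a\<in>UNIV. \<Sum>e\<in>UNIV. \<Sum>c\<in>UNIV. K b a e c * dl b a e c b' a' e' c') = K b' a' e' (c'::'n::finite)"
  by (simp add: dl_nested times_if0 sum_if_const sum.delta')

lemma P2: "(\<Sum>b\<in>UNIV. \<Sum>a\<in>UNIV. \<Sum>e\<in>UNIV. \<Sum>c\<in>UNIV. K b a e c * (if a = c then dl b s e s b' a' e' c' else 0))
   = (if a' = s \<and> c' = s then (\<Sum>a\<in>UNIV. K b' a e' a) else 0)"
  for K :: "'n::finite \<Rightarrow> 'n \<Rightarrow> 'n \<Rightarrow> 'n \<Rightarrow> complex"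
  by (simp add: dl_nested times_if0 sum_if_const sum.delta sum.delta')

lemma P3: "(\<Sum>b\<in>UNIV. \<Sum>a\<in>UNIV. \<Sum>e\<in>UNIV. \<Sum>c\<in>UNIV. K b a e c * (if b = e then dl r a r c b' a' e' c' else 0))
   = (if b' = r \<and> e' = r then (\<Sum>b\<in>UNIV. K b a' b c') else 0)"
  for K :: "'n::finite \<Rightarrow> 'n \<Rightarrow> 'n \<Rightarrow> 'n \<Rightarrow> complex"
  by (simp add: dl_nested times_if0 sum_if_const sum.delta sum.delta')

lemma P4: "(\<Sum>b\<in>UNIV. \<Sum>a\<in>UNIV. \<Sum>e\<in>UNIV. \<Sum>c\<in>UNIV. K b a e c * (if a = c \<and> b = e then dl r s r s b' a' e' c' else 0))
   = (if b' = r \<and> a' = s \<and> e' = r \<and> c' = s then (\<Sum>b\<in>UNIV. \<Sum>a\<in>UNIV. K b a b a) else 0)"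
  for K :: "'n::finite \<Rightarrow> 'n \<Rightarrow> 'n \<Rightarrow> 'n \<Rightarrow> complex"
  by (simp add: dl_nested times_if0 sum_if_const sum.delta sum.delta' if_conj0)

definition Dl :: "'n \<Rightarrow> 'n \<Rightarrow> 'n \<Rightarrow> 'n \<Rightarrow> 'n \<Rightarrow> 'n \<Rightarrow> 'n \<Rightarrow> 'n \<Rightarrow> 'n \<Rightarrow> 'n \<Rightarrow> complex" where
  "Dl r s b a e c b' a' e' c' = dl b a e c b' a' e' c' - (if a = c then dl b s e s b' a' e' c' else 0)
     - (if b = e then dl r a r c b' a' e' c' else 0) + (if a = c \<and> b = e then dl r s r s b' a' e' c' else 0)"

lemma S1:
  fixes K :: "'n::finite \<Rightarrow> 'n \<Rightarrow> 'n \<Rightarrow> 'n \<Rightarrow> complex"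
  assumes m1: "\<And>b e. (\<Sum>a\<in>UNIV. K b a e a) = 0" and m2: "\<And>a c. (\<Sum>b\<in>UNIV. K b a b c) = 0"
  shows "(\<Sum>b\<in>UNIV. \<Sum>a\<in>UNIV. \<Sum>e\<in>UNIV. \<Sum>c\<in>UNIV. K b a e c * Dl r s b a e c b' a' e' c') = K b' a' e' c'"
proof -
  have m3: "(\<Sum>b\<in>UNIV. \<Sum>a\<in>UNIV. K b a b a) = 0"
    by (subst sum.swap) (simp add: m2)
  have "\<And>b a e c. K b a e c * Dl r s b a e c b' a' e' c' = K b a e c * dl b a e c b' a' e' c'
      - K b a e c * (if a = c then dl b s e s b' a' e' c' else 0)
      - K b a e c * (if b = e then dl r a r c b' a' e' c' else 0)
      + K b a e c * (if a = c \<and> b = e then dl r s r s b' a' e' c' else 0)"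
    by (simp only: Dl_def right_diff_distrib distrib_left)
  then show ?thesis by (simp only: sum.distrib sum_subtractf P1 P2 P3 P4 m1 m2 m3) simp
qed

lemma S2: "Dl r s e c b a b' a' e' c' = Dl r s b a e c e' c' b' a'"
  by (simp only: Dl_def dl_def eq_commute[of c a] eq_commute[of e b]) (simp add: conj_ac)

lemma Dl_cnj: "cnj (Dl r s b a e c b' a' e' c') = Dl r s b a e c b' a' e' c'"
  by (simp add: Dl_def dl_def)

lemma piece_AB:
  "(\<lambda>x1 x2 x3 x4. Dl r s b a e c x1 x2 x3 x4 + Dl r s e c b a x1 x2 x3 x4) \<in> KS \<and>
   (\<lambda>x1 x2 x3 x4. \<i> * Dl r s b a e c x1 x2 x3 x4 - \<i> * Dl r s e c b a x1 x2 x3 x4) \<in> KS"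
    (is "?A \<in> KS \<and> ?B \<in> KS")
proof (cases "b = e")
  case bF: False
  show ?thesis
  proof (cases "a = c")
    case aF: False
    have A: "?A \<in> KS" using E1r[OF bF aF] by (rule ks_cong) (use bF aF in \<open>auto simp: Dl_def\<close>)
    have B: "?B \<in> KS" using E1i[OF bF aF] by (rule ks_cong) (use bF aF in \<open>auto simp: Dl_def\<close>)
    show ?thesis using A B by blast
  next
    case aT: True
    show ?thesis
    proof (cases "a = s")
      case sT: True
      have A: "?A \<in> KS" using ks_zero by (rule ks_cong) (use bF aT sT in \<open>auto simp: Dl_def dl_def\<close>)
      have B: "?B \<in> KS" using ks_zero by (rule ks_cong) (use bF aT sT in \<open>auto simp: Dl_def dl_def\<close>)
      show ?thesis using A B by blast
    next
      case sF: False
      have A: "?A \<in> KS" using E2r[OF bF sF] by (rule ks_cong) (use bF aT in \<open>auto simp: Dl_def\<close>)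
      have B: "?B \<in> KS" using E2i[OF bF sF] by (rule ks_cong) (use bF aT in \<open>auto simp: Dl_def\<close>)
      show ?thesis using A B by blast
    qed
  qed
next
  case bT: True
  show ?thesis
  proof (cases "a = c")
    case aF: False
    show ?thesis
    proof (cases "b = r")
      case rT: True
      have A: "?A \<in> KS" using ks_zero by (rule ks_cong) (use bT aF rT in \<open>auto simp: Dl_def dl_def\<close>)
      have B: "?B \<in> KS" using ks_zero by (rule ks_cong) (use bT aF rT in \<open>auto simp: Dl_def dl_def\<close>)
      show ?thesis using A B by blast
    next
      case rF: False
      have A: "?A \<in> KS" using E3r[OF rF aF] by (rule ks_cong) (use bT aF in \<open>auto simp: Dl_def\<close>)
      have B: "?B \<in> KS" using E3i[OF rF aF] by (rule ks_cong) (use bT aF in \<open>auto simp: Dl_def\<close>)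
      show ?thesis using A B by blast
    qed
  next
    case aT: True
    show ?thesis
    proof (cases "b = r \<or> a = s")
      case True
      have A: "?A \<in> KS" using ks_zero by (rule ks_cong) (use bT aT True in \<open>auto simp: Dl_def dl_def\<close>)
      have B: "?B \<in> KS" using ks_zero by (rule ks_cong) (use bT aT True in \<open>auto simp: Dl_def dl_def\<close>)
      show ?thesis using A B by blast
    next
      case False
      then have "b \<noteq> r" "a \<noteq> s" by auto
      have E: "(\<lambda>x1 x2 x3 x4. complex_of_real 2 * (dl b a b a x1 x2 x3 x4 - dl b s b s x1 x2 x3 x4 - dl r a r a x1 x2 x3 x4 + dl r s r s x1 x2 x3 x4)) \<in> KS"
        by (rule ks_scale, rule E4[OF \<open>b \<noteq> r\<close> \<open>a \<noteq> s\<close>])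
      have A: "?A \<in> KS" using E by (rule ks_cong) (use bT aT in \<open>auto simp: Dl_def\<close>)
      have B: "?B \<in> KS" using ks_zero by (rule ks_cong) (use bT aT in \<open>auto simp: Dl_def\<close>)
      show ?thesis using A B by blast
    qed
  qed
qed

lemma piece:
  "(\<lambda>x1 x2 x3 x4. z * Dl r s b a e c x1 x2 x3 x4 + cnj z * Dl r s e c b a x1 x2 x3 x4) \<in> KS"
proof -
  have "(\<lambda>x1 x2 x3 x4. complex_of_real (Re z) * (Dl r s b a e c x1 x2 x3 x4 + Dl r s e c b a x1 x2 x3 x4)
      + complex_of_real (Im z) * (\<i> * Dl r s b a e c x1 x2 x3 x4 - \<i> * Dl r s e c b a x1 x2 x3 x4)) \<in> KS"
    using piece_AB[of r s b a e c] by (intro ks_add[OF ks_scale ks_scale]) auto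
  then show ?thesis by (rule ks_cong) (simp add: complex_eq_iff algebra_simps)
qed

lemma K0_in_KS:
  fixes K :: "'n::finite \<Rightarrow> 'n \<Rightarrow> 'n \<Rightarrow> 'n \<Rightarrow> complex"
  assumes hK: "\<And>b a e c. K e c b a = cnj (K b a e c)"
    and m1: "\<And>b e. (\<Sum>a\<in>UNIV. K b a e a) = 0" and m2: "\<And>a c. (\<Sum>b\<in>UNIV. K b a b c) = 0"
  shows "K \<in> KS"
proof -
  obtain r s :: 'n where True by blast
  let ?P = "\<lambda>b a e c. (\<lambda>x1 x2 x3 x4. K b a e c * Dl r s b a e c x1 x2 x3 x4 + cnj (K b a e c) * Dl r s e c b a x1 x2 x3 x4)"
  have p4: "?P b a e c \<in> KS" for b a e c by (rule piece)
  have p3: "(\<lambda>x1 x2 x3 x4. \<Sum>c\<in>UNIV. ?P b a e c x1 x2 x3 x4) \<in> KS" for b a e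
    by (rule ks_sum[of UNIV "\<lambda>c. ?P b a e c"]) (simp_all add: p4)
  have p2: "(\<lambda>x1 x2 x3 x4. \<Sum>e\<in>UNIV. \<Sum>c\<in>UNIV. ?P b a e c x1 x2 x3 x4) \<in> KS" for b a
    by (rule ks_sum[of UNIV "\<lambda>e x1 x2 x3 x4. \<Sum>c\<in>UNIV. ?P b a e c x1 x2 x3 x4", simplified]) (simp_all add: p3)
  have p1: "(\<lambda>x1 x2 x3 x4. \<Sum>a\<in>UNIV. \<Sum>e\<in>UNIV. \<Sum>c\<in>UNIV. ?P b a e c x1 x2 x3 x4) \<in> KS" for b
    by (rule ks_sum[of UNIV "\<lambda>a x1 x2 x3 x4. \<Sum>e\<in>UNIV. \<Sum>c\<in>UNIV. ?P b a e c x1 x2 x3 x4", simplified]) (simp_all add: p2)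
  have p0: "(\<lambda>x1 x2 x3 x4. \<Sum>b\<in>UNIV. \<Sum>a\<in>UNIV. \<Sum>e\<in>UNIV. \<Sum>c\<in>UNIV. ?P b a e c x1 x2 x3 x4) \<in> KS"
    by (rule ks_sum[of UNIV "\<lambda>b x1 x2 x3 x4. \<Sum>a\<in>UNIV. \<Sum>e\<in>UNIV. \<Sum>c\<in>UNIV. ?P b a e c x1 x2 x3 x4", simplified]) (simp_all add: p1)
  have "(\<lambda>x1 x2 x3 x4. complex_of_real (1/2) * (\<Sum>b\<in>UNIV. \<Sum>a\<in>UNIV. \<Sum>e\<in>UNIV. \<Sum>c\<in>UNIV. ?P b a e c x1 x2 x3 x4)) \<in> KS"
    by (rule ks_scale[OF p0])
  then show ?thesis
  proof (rule ks_cong)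
    fix x1 x2 x3 x4
    have s1: "(\<Sum>b\<in>UNIV. \<Sum>a\<in>UNIV. \<Sum>e\<in>UNIV. \<Sum>c\<in>UNIV. K b a e c * Dl r s b a e c x1 x2 x3 x4) = K x1 x2 x3 x4"
      by (rule S1[of K, OF m1 m2])
    have s1': "(\<Sum>b\<in>UNIV. \<Sum>a\<in>UNIV. \<Sum>e\<in>UNIV. \<Sum>c\<in>UNIV. cnj (K b a e c) * Dl r s e c b a x1 x2 x3 x4) = K x1 x2 x3 x4"
    proof -
      have "(\<Sum>b\<in>UNIV. \<Sum>a\<in>UNIV. \<Sum>e\<in>UNIV. \<Sum>c\<in>UNIV. cnj (K b a e c) * Dl r s e c b a x1 x2 x3 x4)
          = cnj (\<Sum>b\<in>UNIV. \<Sum>a\<in>UNIV. \<Sum>e\<in>UNIV. \<Sum>c\<in>UNIV. K b a e c * Dl r s b a e c x3 x4 x1 x2)"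
        by (simp add: S2 Dl_cnj)
      also have "\<dots> = cnj (K x3 x4 x1 x2)" by (simp only: S1[of K, OF m1 m2])
      also have "\<dots> = K x1 x2 x3 x4" using hK[of x3 x4 x1 x2] by simp
      finally show ?thesis .
    qed
    show "complex_of_real (1/2) * (\<Sum>b\<in>UNIV. \<Sum>a\<in>UNIV. \<Sum>e\<in>UNIV. \<Sum>c\<in>UNIV. ?P b a e c x1 x2 x3 x4) = K x1 x2 x3 x4"
      by (simp only: sum.distrib s1 s1') simp
  qed
qed

lemma kM_mat1: "kM (mat 1 :: 'n::finite cmat) b a e c = (if b = a \<and> e = c then 1 else 0)"
  by (simp add: kM_def mat_def)

lemma unital_good:
  fixes T :: "'n::finite cmat \<Rightarrow> 'n cmat"
  assumes "unital_channel T"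
  shows "good T"
proof -
  have lin: "clinear_map T" and cp: "completely_positive T" and tp: "\<And>A. trace_m (T A) = trace_m A"
    and un: "T (mat 1) = mat 1" using assms unfolding unital_channel_def by auto
  define K0 where "K0 = (\<lambda>b a e c. kT T b a e c - kM (mat 1 :: 'n cmat) b a e c)"
  have h: "K0 e c b a = cnj (K0 b a e c)" for b a e c
    using kT_herm[OF lin cp, of e c b a] by (auto simp: K0_def kM_mat1)
  have m1: "(\<Sum>a\<in>UNIV. K0 b a e a) = 0" for b e
    using kT_unital[OF lin un, of b e] by (simp add: K0_def kM_mat1 sum_subtractf if_conj0 sum.delta)
  have m2: "(\<Sum>b\<in>UNIV. K0 b a b c) = 0" for a c
    using kT_tp[of T a c, OF tp] by (simp add: K0_def kM_mat1 sum_subtractf if_conj0 sum.delta)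
  have "K0 \<in> KS" by (rule K0_in_KS[of K0, OF h m1 m2])
  then have "(\<lambda>b a e c. K0 b a e c + kM (mat 1 :: 'n cmat) b a e c) \<in> KS"
    by (rule ks_add[OF _ ks_unit[OF unitary_mat1]])
  then have "kT T \<in> KS" by (simp add: K0_def)
  then obtain L where "valid L" "kT T = ksum L" unfolding KS_def by blast
  then show ?thesis unfolding good_def using choi_eq_cs[OF lin] by blast
qed




lemma foldr_comp_gen: "foldr (\<circ>) fs g = foldr (\<circ>) fs id \<circ> g"
  by (induction fs) (simp_all add: comp_assoc)

lemma foldr_snoc: "foldr (\<circ>) (fs @ [f]) id = foldr (\<circ>) fs id \<circ> f"
  by (simp add: foldr_comp_gen[of fs f])

lemma clin_id: "clinear_map (id :: 'n::finite cmat \<Rightarrow> 'n cmat)"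
  by (simp add: clinear_map_def)

lemma choi_id: "choi (id :: 'n::finite cmat \<Rightarrow> 'n cmat) = cs [(1, mat 1)]"
  unfolding choi_eq_cs[OF clin_id]
  by (simp add: fun_eq_iff kT_def Em_def kM_mat1)

lemma comp_all:
  fixes T :: "nat \<Rightarrow> ('n::finite cmat \<Rightarrow> 'n cmat)"
  assumes "\<And>i. i < k \<Longrightarrow> unital_channel (T i)"
  shows "clinear_map (foldr (\<circ>) (map T [0..<k]) id) \<and> good (foldr (\<circ>) (map T [0..<k]) id)
     \<and> normU (foldr (\<circ>) (map T [0..<k]) id) \<le> (\<Prod>i<k. normU (T i))"
  using assms
proof (induction k)
  case 0
  have "normU (id :: 'n cmat \<Rightarrow> 'n cmat) \<le> n1 [(1::real, mat 1 :: 'n cmat)]"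
    by (rule normU_le[OF _ choi_id]) (simp add: valid_def unitary_mat1)
  moreover have "good (id :: 'n cmat \<Rightarrow> 'n cmat)" unfolding good_def
    by (intro exI[of _ "[(1, mat 1)]"]) (simp add: valid_def unitary_mat1 choi_id)
  ultimately show ?case using clin_id by (simp add: n1_def id_def)
next
  case (Suc k)
  let ?F = "foldr (\<circ>) (map T [0..<k]) id"
  have pk: "\<And>i. i < k \<Longrightarrow> unital_channel (T i)" using Suc.prems by simp
  have IH0: "clinear_map ?F \<and> good ?F \<and> normU ?F \<le> (\<Prod>i<k. normU (T i))"
    using Suc.IH pk by blast
  have IH: "clinear_map ?F" "good ?F" "normU ?F \<le> (\<Prod>i<k. normU (T i))"
    using IH0 by blast+
  have uk: "unital_channel (T k)" using Suc.prems by simp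
  have lk: "clinear_map (T k)" using uk unital_channel_def by blast
  have gk: "good (T k)" by (rule unital_good[OF uk])
  have eq: "foldr (\<circ>) (map T [0..<Suc k]) id = ?F \<circ> T k" by (simp add: foldr_comp_gen[of "map T [0..<k]" "T k"])
  have c: "good (?F \<circ> T k) \<and> normU (?F \<circ> T k) \<le> normU ?F * normU (T k)"
    by (rule comp_norm[OF IH(1) lk IH(2) gk])
  have nk: "normU (T k) \<ge> 0" using gk normU_nonneg unfolding good_def by blast
  have m: "normU ?F * normU (T k) \<le> (\<Prod>i<k. normU (T i)) * normU (T k)"
    by (rule mult_right_mono[OF IH(3) nk])
  have fin: "normU (?F \<circ> T k) \<le> (\<Prod>i<k. normU (T i)) * normU (T k)"
    using c m by (meson order_trans)
  show ?case unfolding eq prod.lessThan_Suc using fin c clin_comp[OF IH(1) lk] by blast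
qed

lemma choi_lin_comb:
  "choi (\<lambda>X. \<Sum>i<k. p i *\<^sub>R T i X) = (\<Sum>i<k. p i *\<^sub>R choi (T i :: 'n::finite cmat \<Rightarrow> 'n cmat))"
  by (simp add: vec_eq_iff choi_def id_tensor_map_def)

definition combL :: "(nat \<Rightarrow> real) \<Rightarrow> (nat \<Rightarrow> (real \<times> 'n::finite cmat) list) \<Rightarrow> nat \<Rightarrow> (real \<times> 'n cmat) list" where
  "combL p Lf k = concat (map (\<lambda>i. scaleL (p i) (Lf i)) [0..<k])"

lemma combL_props:
  assumes "\<And>i. i < k \<Longrightarrow> valid (Lf i)"
  shows "valid (combL p Lf k) \<and> cs (combL p Lf k) = (\<Sum>i<k. p i *\<^sub>R cs (Lf i))
     \<and> n1 (combL p Lf k) = (\<Sum>i<k. \<bar>p i\<bar> * n1 (Lf i))"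
  using assms
proof (induction k)
  case 0 then show ?case by (simp add: combL_def valid_def cs_def n1_def)
next
  case (Suc k)
  have "combL p Lf (Suc k) = combL p Lf k @ scaleL (p k) (Lf k)" by (simp add: combL_def)
  then show ?case using Suc by (simp add: valid_append valid_scaleL cs_append cs_scaleL n1_append n1_scaleL)
qed

lemma conv_norm:
  fixes T :: "nat \<Rightarrow> ('n::finite cmat \<Rightarrow> 'n cmat)"
  assumes u: "\<And>i. i < k \<Longrightarrow> unital_channel (T i)" and pp: "\<And>i. i < k \<Longrightarrow> p i \<ge> 0"
    and ps: "(\<Sum>i<k. p i) = 1"
  shows "normU (\<lambda>X. \<Sum>i<k. p i *\<^sub>R T i X) \<le> (\<Sum>i<k. p i * normU (T i))"
proof (rule field_le_epsilon)
  fix \<epsilon> :: real assume e: "\<epsilon> > 0"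
  have "\<forall>i\<in>{..<k}. \<exists>L. valid L \<and> choi (T i) = cs L \<and> n1 L < normU (T i) + \<epsilon>"
  proof
    fix i assume "i \<in> {..<k}"
    then have "good (T i)" using unital_good u by auto
    then obtain L0 where "valid L0" "choi (T i) = cs L0" unfolding good_def by blast
    then show "\<exists>L. valid L \<and> choi (T i) = cs L \<and> n1 L < normU (T i) + \<epsilon>" using normU_approx e by blast
  qed
  then obtain Lf where Lf: "\<And>i. i < k \<Longrightarrow> valid (Lf i) \<and> choi (T i) = cs (Lf i) \<and> n1 (Lf i) < normU (T i) + \<epsilon>"
    by (metis bchoice lessThan_iff)
  have P: "valid (combL p Lf k) \<and> cs (combL p Lf k) = (\<Sum>i<k. p i *\<^sub>R cs (Lf i))
     \<and> n1 (combL p Lf k) = (\<Sum>i<k. \<bar>p i\<bar> * n1 (Lf i))" by (rule combL_props) (use Lf in auto)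
  have "choi (\<lambda>X. \<Sum>i<k. p i *\<^sub>R T i X) = (\<Sum>i<k. p i *\<^sub>R choi (T i))" by (rule choi_lin_comb)
  also have "\<dots> = cs (combL p Lf k)" using P Lf by simp
  finally have ch: "choi (\<lambda>X. \<Sum>i<k. p i *\<^sub>R T i X) = cs (combL p Lf k)" .
  have "normU (\<lambda>X. \<Sum>i<k. p i *\<^sub>R T i X) \<le> n1 (combL p Lf k)"
    by (rule normU_le[OF _ ch]) (use P in blast)
  also have "\<dots> = (\<Sum>i<k. p i * n1 (Lf i))" using P pp by simp
  also have "\<dots> \<le> (\<Sum>i<k. p i * (normU (T i) + \<epsilon>))"
    by (rule sum_mono) (use pp Lf in \<open>auto intro: mult_left_mono less_imp_le\<close>)
  also have "\<dots> = (\<Sum>i<k. p i * normU (T i)) + \<epsilon>"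
    by (simp add: distrib_left sum.distrib sum_distrib_right[symmetric] ps)
  finally show "normU (\<lambda>X. \<Sum>i<k. p i *\<^sub>R T i X) \<le> (\<Sum>i<k. p i * normU (T i)) + \<epsilon>" .
qed

theorem proposition3:
  fixes T :: "nat \<Rightarrow> ('n::finite cmat \<Rightarrow> 'n cmat)" and p :: "nat \<Rightarrow> real" and k :: nat
  assumes "k \<ge> 1"
    and "\<And>i. i < k \<Longrightarrow> unital_channel (T i)"
    and "\<And>i. i < k \<Longrightarrow> p i \<ge> 0"
    and "(\<Sum>i<k. p i) = 1"
  shows "normU (foldr (\<circ>) (map T [0..<k]) id) \<le> (\<Prod>i<k. normU (T i))
       \<and> normU (\<lambda>X. \<Sum>i<k. p i *\<^sub>R T i X) \<le> (\<Sum>i<k. p i * normU (T i))"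
  using comp_all[of k T, OF assms(2)] conv_norm[of k T p, OF assms(2,3,4)] by blast


end
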